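(* Let $ABC$ be a triangle and let $P$ be a point. Let $H_A, H_B, H_C$ be the orthocenters of the triangles $BPC$, $CPA$, $PAB$ respectively, and let $\triangle_A, \triangle_B, \triangle_C$ denote the triangles $AH_BH_C$, $BH_CH_A$, $CH_AH_B$ respectively. Then $\triangle_A, \triangle_B, \triangle_C$ have a common orthocenter.
   Context: All triangles involved are assumed nondegenerate so that their orthocenters are defined. *)

theory Defs
  imports "HOL-Analysis.Analysis"
begin

definition nondegenerate_triangle :: "real^2 \<Rightarrow> real^2 \<Rightarrow> real^2 \<Rightarrow> bool" where
  "nondegenerate_triangle X Y Z \<longleftrightarrow> \<not> collinear {X, Y, Z}"

definition is_orthocenter :: "real^2 \<Rightarrow> real^2 \<Rightarrow> real^2 \<Rightarrow> real^2 \<Rightarrow> bool" where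
  "is_orthocenter H X Y Z \<longleftrightarrow>
     (H - X) \<bullet> (Y - Z) = 0 \<and> (H - Y) \<bullet> (Z - X) = 0 \<and> (H - Z) \<bullet> (X - Y) = 0"

definition orthocenter :: "real^2 \<Rightarrow> real^2 \<Rightarrow> real^2 \<Rightarrow> real^2" where
  "orthocenter X Y Z = (THE H. is_orthocenter H X Y Z)"

end

theory Submission
  imports Defs
begin

definition cr2 :: "real^2 \<Rightarrow> real^2 \<Rightarrow> real" where
  "cr2 x y = x$1 * y$2 - x$2 * y$1"

lemma dot2: "(x::real^2) \<bullet> y = x$1*y$1 + x$2*y$2"
  by (simp add: inner_vec_def sum_2)

lemma vec2_eqI: "(x::real^2)$1 = y$1 \<Longrightarrow> x$2 = y$2 \<Longrightarrow> x = y"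
  by (simp add: vec_eq_iff forall_2)

lemma cr_zero_collinear:
  assumes "cr2 (Y - X) (Z - X) = 0"
  shows "collinear {X, Y, Z}"
proof -
  have e: "{X,Y,Z} = {Y,X,Z}" by auto
  define u where "u = Y - X"
  define v where "v = Z - X"
  have c0: "u$1 * v$2 - u$2 * v$1 = 0" using assms by (simp add: cr2_def u_def v_def)
  have "u = 0 \<or> v = 0 \<or> (\<exists>c. v = c *\<^sub>R u)"
  proof (cases "u = 0")
    case True then show ?thesis by simp
  next
    case False
    then have "u$1 \<noteq> 0 \<or> u$2 \<noteq> 0" by (metis vec2_eqI zero_index)
    then show ?thesis
    proof
      assume h: "u$1 \<noteq> 0"
      have "v = (v$1/u$1) *\<^sub>R u"
        apply (rule vec2_eqI) using h c0 by (auto simp: field_simps)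
      then show ?thesis by blast
    next
      assume h: "u$2 \<noteq> 0"
      have "v = (v$2/u$2) *\<^sub>R u"
        apply (rule vec2_eqI) using h c0 by (auto simp: field_simps)
      then show ?thesis by blast
    qed
  qed
  then have "collinear {0, u, v}" by (simp add: collinear_lemma)
  then show ?thesis unfolding e u_def v_def
    by (subst collinear_3) (auto simp: insert_commute)
qed

lemma nondeg_cr: "nondegenerate_triangle X Y Z \<Longrightarrow> cr2 (Y - X) (Z - X) \<noteq> 0"
  using cr_zero_collinear nondegenerate_triangle_def by blast

lemma nondeg_neq: "nondegenerate_triangle X Y Z \<Longrightarrow> X \<noteq> Y \<and> Y \<noteq> Z \<and> X \<noteq> Z"
  unfolding nondegenerate_triangle_def
  by (metis collinear_2 insert_absorb2 insert_commute)

lemma orth_exists: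
  assumes "nondegenerate_triangle X Y Z"
  shows "\<exists>H. is_orthocenter H X Y Z"
proof -
  define u where "u = Y - Z"
  define v where "v = Z - X"
  define r1 where "r1 = X \<bullet> u"
  define r2 where "r2 = Y \<bullet> v"
  define d where "d = u$1 * v$2 - u$2 * v$1"
  have "cr2 (Y - X) (Z - X) \<noteq> 0" using nondeg_cr assms by blast
  then have dnz: "d \<noteq> 0" unfolding d_def u_def v_def cr2_def
    by (simp add: algebra_simps)
  define H :: "real^2" where "H = vector [(r1 * v$2 - u$2 * r2)/d, (u$1 * r2 - v$1 * r1)/d]"
  have h1: "H$1 * d = r1 * v$2 - u$2 * r2" using dnz by (simp add: H_def)
  have h2: "H$2 * d = u$1 * r2 - v$1 * r1" using dnz by (simp add: H_def)
  have e1: "(H - X) \<bullet> u = 0"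
  proof -
    have "((H - X) \<bullet> u) * d = 0"
      using h1 h2 unfolding dot2 r1_def r2_def d_def by (simp add: algebra_simps dot2) algebra
    then show ?thesis using dnz by simp
  qed
  have e2: "(H - Y) \<bullet> v = 0"
  proof -
    have "((H - Y) \<bullet> v) * d = 0"
      using h1 h2 unfolding dot2 r1_def r2_def d_def by (simp add: algebra_simps dot2) algebra
    then show ?thesis using dnz by simp
  qed
  have "(H - Z) \<bullet> (X - Y) = 0"
    using e1 e2 unfolding u_def v_def dot2 by simp algebra
  then have "is_orthocenter H X Y Z"
    using e1 e2 unfolding is_orthocenter_def u_def v_def by simp
  then show ?thesis by blast
qed


lemma perp2:
  assumes "d \<bullet> u = 0" "d \<bullet> v = 0" "cr2 u v \<noteq> 0"
  shows "d = 0"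
proof -
  have "d$1 * cr2 u v = 0" "d$2 * cr2 u v = 0"
    using assms(1,2) unfolding dot2 cr2_def by algebra+
  then show ?thesis using assms(3) by (intro vec2_eqI) auto
qed

lemma orth_unique:
  assumes "nondegenerate_triangle X Y Z" "is_orthocenter H X Y Z" "is_orthocenter H' X Y Z"
  shows "H = H'"
proof -
  have c: "cr2 (Y - Z) (Z - X) \<noteq> 0" using nondeg_cr[OF assms(1)]
    unfolding cr2_def by (simp add: algebra_simps)
  have "(H - H') \<bullet> (Y - Z) = 0" "(H - H') \<bullet> (Z - X) = 0"
    using assms(2,3) unfolding is_orthocenter_def dot2 by (simp_all add: algebra_simps)
  then have "H - H' = 0" using perp2 c by blast
  then show ?thesis by simp
qed

lemma orth_is:
  assumes "nondegenerate_triangle X Y Z"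
  shows "is_orthocenter (orthocenter X Y Z) X Y Z"
  unfolding orthocenter_def
  using orth_exists[OF assms] orth_unique[OF assms] by (metis theI)

lemma orth_eq:
  assumes "nondegenerate_triangle X Y Z" "is_orthocenter H X Y Z"
  shows "orthocenter X Y Z = H"
  using orth_is[OF assms(1)] orth_unique[OF assms(1)] assms(2) by blast

lemma orth_rot: "is_orthocenter H X Y Z \<Longrightarrow> is_orthocenter H Y Z X"
  unfolding is_orthocenter_def by auto

lemma sw0: "(x::real^2) \<bullet> (a - b) = 0 \<Longrightarrow> x \<bullet> (b - a) = 0"
  by (metis inner_minus_right minus_diff_eq neg_equal_0_iff_equal)

lemma orth_swap: "is_orthocenter H X Y Z \<Longrightarrow> is_orthocenter H Y X Z"
  unfolding is_orthocenter_def using sw0 by blast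

lemma parallel:
  assumes "u \<bullet> w = 0" "v \<bullet> w = 0" "w \<noteq> 0"
  shows "cr2 u v = 0"
proof -
  have "w$1 * cr2 u v = 0" "w$2 * cr2 u v = 0"
    using assms(1,2) unfolding dot2 cr2_def by algebra+
  moreover have "w$1 \<noteq> 0 \<or> w$2 \<noteq> 0" using assms(3) by (metis vec2_eqI zero_index)
  ultimately show ?thesis by auto
qed

lemma inter:
  assumes "cr2 d u = 0" "cr2 d v = 0" "cr2 u v \<noteq> 0"
  shows "d = 0"
proof -
  have "d$1 * cr2 u v = 0" "d$2 * cr2 u v = 0"
    using assms(1,2) unfolding cr2_def by algebra+
  then show ?thesis using assms(3) by (intro vec2_eqI) auto
qed

lemma cr2_diff: "cr2 (x - y) w = cr2 x w - cr2 y w"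
  unfolding cr2_def by (simp add: algebra_simps)

lemma F: "xha*(xb-xc)+yha*(yb-yc) = (0::real) \<Longrightarrow> xha*xc+yha*yc = xb*xc+yb*yc \<Longrightarrow>
  (xha*ya - yha*xa)*(xb*yc-yb*xc) = - ((xb-xc)*xa+(yb-yc)*ya)*(xb*xc+yb*yc)"
  by algebra

lemma key_s:
  fixes xa ya xb yb xc yc xha yha xhb yhb xhc yhc xq yq :: real
  assumes "xha*(xb-xc)+yha*(yb-yc) = 0" "xha*xc+yha*yc = xb*xc+yb*yc"
    "xhb*(xc-xa)+yhb*(yc-ya) = 0" "xhb*xa+yhb*ya = xc*xa+yc*ya"
    "xhc*(xa-xb)+yhc*(ya-yb) = 0" "xhc*xb+yhc*yb = xa*xb+ya*yb"
    "(xq-xhb)*yb - (yq-yhb)*xb = 0" "(xq-xhc)*yc - (yq-yhc)*xc = 0"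
    "xb*yc - yb*xc \<noteq> 0"
  shows "(xq-xha)*ya - (yq-yha)*xa = 0"
proof -
  have F1: "(xha*ya - yha*xa)*(xb*yc-yb*xc) = - ((xb-xc)*xa+(yb-yc)*ya)*(xb*xc+yb*yc)"
    using F assms(1,2) by blast
  have F2: "(xhb*yb - yhb*xb)*(xc*ya-yc*xa) = - ((xc-xa)*xb+(yc-ya)*yb)*(xc*xa+yc*ya)"
    using F[OF assms(3,4)] by blast
  have F3: "(xhc*yc - yhc*xc)*(xa*yb-ya*xb) = - ((xa-xb)*xc+(ya-yb)*yc)*(xa*xb+ya*yb)"
    using F[OF assms(5,6)] by blast
  have "((xq-xha)*ya - (yq-yha)*xa) * (xb*yc - yb*xc) = 0"
    using F1 F2 F3 assms(7,8) by algebra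
  then show ?thesis using assms(9) by simp
qed

lemma nondeg_perm:
  assumes "nondegenerate_triangle X Y Z"
  shows "nondegenerate_triangle Y X Z" "nondegenerate_triangle Y Z X"
  using assms unfolding nondegenerate_triangle_def by (auto simp: insert_commute)

lemma key_v:
  fixes a b c ha hb hc q :: "real^2"
  assumes "ha \<bullet> (b - c) = 0" "ha \<bullet> c = b \<bullet> c"
    "hb \<bullet> (c - a) = 0" "hb \<bullet> a = c \<bullet> a"
    "hc \<bullet> (a - b) = 0" "hc \<bullet> b = a \<bullet> b"
    "cr2 (q - hb) b = 0" "cr2 (q - hc) c = 0" "cr2 b c \<noteq> 0"
  shows "cr2 (q - ha) a = 0"
proof -
  have "(q$1 - ha$1) * a$2 - (q$2 - ha$2) * a$1 = 0"
    apply (rule key_s[where xb="b$1" and yb="b$2" and xc="c$1" and yc="c$2" and xhb="hb$1" and yhb="hb$2" and xhc="hc$1" and yhc="hc$2"])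
    using assms unfolding dot2 cr2_def vector_minus_component by simp_all
  then show ?thesis unfolding cr2_def by simp
qed

lemma eqdot: "(x - y) \<bullet> c = 0 \<Longrightarrow> x \<bullet> c = y \<bullet> c"
  by (simp add: inner_diff_left)

lemma key:
  assumes "is_orthocenter HA B P C" "is_orthocenter HB C P A" "is_orthocenter HC A P B"
    "cr2 (Q - HB) (B - P) = 0" "cr2 (Q - HC) (C - P) = 0" "cr2 (B - P) (C - P) \<noteq> 0"
  shows "cr2 (Q - HA) (A - P) = 0"
proof -
  have "cr2 ((Q - P) - (HA - P)) (A - P) = 0"
  proof (rule key_v)
    show "(HA - P) \<bullet> ((B - P) - (C - P)) = 0" using assms(1) sw0 unfolding is_orthocenter_def by simp
    show "(HA - P) \<bullet> (C - P) = (B - P) \<bullet> (C - P)"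
      by (rule eqdot) (use assms(1) sw0 in \<open>simp add: is_orthocenter_def\<close>)
    show "(HB - P) \<bullet> ((C - P) - (A - P)) = 0" using assms(2) sw0 unfolding is_orthocenter_def by simp
    show "(HB - P) \<bullet> (A - P) = (C - P) \<bullet> (A - P)"
      by (rule eqdot) (use assms(2) sw0 in \<open>simp add: is_orthocenter_def\<close>)
    show "(HC - P) \<bullet> ((A - P) - (B - P)) = 0" using assms(3) sw0 unfolding is_orthocenter_def by simp
    show "(HC - P) \<bullet> (B - P) = (A - P) \<bullet> (B - P)"
      by (rule eqdot) (use assms(3) sw0 in \<open>simp add: is_orthocenter_def\<close>)
    show "cr2 ((Q - P) - (HB - P)) (B - P) = 0" using assms(4) by simp
    show "cr2 ((Q - P) - (HC - P)) (C - P) = 0" using assms(5) by simp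
    show "cr2 (B - P) (C - P) \<noteq> 0" by (rule assms(6))
  qed
  then show ?thesis by simp
qed

lemma onlines:
  assumes "is_orthocenter HA B P C" "is_orthocenter HB C P A" "is_orthocenter HC A P B"
    "nondegenerate_triangle A HB HC"
  shows "cr2 (orthocenter A HB HC - HB) (B - P) = 0 \<and> cr2 (orthocenter A HB HC - HC) (C - P) = 0"
proof -
  define Q where "Q = orthocenter A HB HC"
  have oQ: "is_orthocenter Q A HB HC" using orth_is[OF assms(4)] Q_def by simp
  have n: "A \<noteq> HB" "A \<noteq> HC" using nondeg_neq[OF assms(4)] by auto
  have "cr2 (Q - HB) (B - P) = 0"
  proof (rule parallel)
    show "(Q - HB) \<bullet> (HC - A) = 0" using oQ unfolding is_orthocenter_def by simp
    show "(B - P) \<bullet> (HC - A) = 0" using assms(3) unfolding is_orthocenter_def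
      by (metis sw0 inner_commute)
    show "HC - A \<noteq> 0" using n by simp
  qed
  moreover have "cr2 (Q - HC) (C - P) = 0"
  proof (rule parallel)
    show "(Q - HC) \<bullet> (HB - A) = 0" using oQ unfolding is_orthocenter_def
      by (metis sw0)
    show "(C - P) \<bullet> (HB - A) = 0" using assms(2) unfolding is_orthocenter_def
      by (metis inner_commute)
    show "HB - A \<noteq> 0" using n by simp
  qed
  ultimately show ?thesis unfolding Q_def by simp
qed

lemma same_pt:
  assumes "cr2 (Q - HA) (A - P) = 0" "cr2 (Q - HB) (B - P) = 0"
    "cr2 (R - HA) (A - P) = 0" "cr2 (R - HB) (B - P) = 0" "cr2 (A - P) (B - P) \<noteq> 0"
  shows "Q = R"
proof -
  have "cr2 (Q - R) (A - P) = 0"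
    using assms(1,3) cr2_diff[of "Q - HA" "R - HA" "A - P"] by simp
  moreover have "cr2 (Q - R) (B - P) = 0"
    using assms(2,4) cr2_diff[of "Q - HB" "R - HB" "B - P"] by simp
  ultimately have "Q - R = 0" using inter assms(5) by blast
  then show ?thesis by simp
qed

theorem proposition2p1:
  fixes A B C P :: "real^2"
  defines "HA \<equiv> orthocenter B P C"
      and "HB \<equiv> orthocenter C P A"
      and "HC \<equiv> orthocenter P A B"
  assumes "nondegenerate_triangle A B C"
      and "nondegenerate_triangle B P C"
      and "nondegenerate_triangle C P A"
      and "nondegenerate_triangle P A B"
      and "nondegenerate_triangle A HB HC"
      and "nondegenerate_triangle B HC HA"
      and "nondegenerate_triangle C HA HB"
  shows "orthocenter A HB HC = orthocenter B HC HA
       \<and> orthocenter B HC HA = orthocenter C HA HB"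
proof -
  have oA: "is_orthocenter HA B P C" unfolding HA_def using orth_is assms(5) by blast
  have oB: "is_orthocenter HB C P A" unfolding HB_def using orth_is assms(6) by blast
  have oC: "is_orthocenter HC A P B" unfolding HC_def using orth_is assms(7) orth_swap by blast
  have cBC: "cr2 (B - P) (C - P) \<noteq> 0" using nondeg_cr nondeg_perm(1)[OF assms(5)] by blast
  have cCA: "cr2 (C - P) (A - P) \<noteq> 0" using nondeg_cr nondeg_perm(1)[OF assms(6)] by blast
  have cAB: "cr2 (A - P) (B - P) \<noteq> 0" using nondeg_cr assms(7) by blast
  define QA where "QA = orthocenter A HB HC"
  define QB where "QB = orthocenter B HC HA"
  define QC where "QC = orthocenter C HA HB"
  have a1: "cr2 (QA - HB) (B - P) = 0" "cr2 (QA - HC) (C - P) = 0"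
    using onlines[OF oA oB oC assms(8)] QA_def by auto
  have a2: "cr2 (QA - HA) (A - P) = 0" using key[OF oA oB oC a1 cBC] .
  have b1: "cr2 (QB - HC) (C - P) = 0" "cr2 (QB - HA) (A - P) = 0"
    using onlines[OF oB oC oA assms(9)] QB_def by auto
  have b2: "cr2 (QB - HB) (B - P) = 0" using key[OF oB oC oA b1 cCA] .
  have c1: "cr2 (QC - HA) (A - P) = 0" "cr2 (QC - HB) (B - P) = 0"
    using onlines[OF oC oA oB assms(10)] QC_def by auto
  have "QA = QB" using same_pt[OF a2 a1(1) b1(2) b2 cAB] .
  moreover have "QB = QC" using same_pt[OF b1(2) b2 c1 cAB] .
  ultimately show ?thesis unfolding QA_def QB_def QC_def by simp
qed

end
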